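(* Let $p$ be an odd prime and $G$ a finite non-abelian $2$-generated $p$-group with cyclic $G'$, with parameters and the fixed basis $(b_1,b_2)$ and $a=[b_2,b_1]$ as in the context. Then: (1) $\mathrm{Z}(G)\cap G'=\langle a^{p^{\max(o_1,o_2)}}\rangle$; (2) $\exp(G)=p^{\max(n_1+o'_1,n_2+o'_2)}$; (3) for $i\ge2$, $\gamma_i(G)=\langle a^{p^{(i-2)(m-\max(o_1,o_2))}}\rangle$, and the nilpotency class of $G$ is $1+\lceil m/(m-\max(o_1,o_2))\rceil$.
   Context: Conventions: $[x,y]=x^{-1}y^{-1}xy$, $x^y=y^{-1}xy$; $\gamma_i$ is the lower central series. Let $|G'|=p^m$, $G/G'\cong C_{p^{n_1}}\times C_{p^{n_2}}$, $n_1\ge n_2\ge1$. A basis is a pair $(b_1,b_2)$ with $G/G'=\langle b_1G'\rangle\times\langle b_2G'\rangle$ and $|b_iG'|=p^{n_i}$; $\mathcal{B}$ is the set of bases. For $g\in G$, $p^{o(g)}=|g{\rm C}_G(G')|$. $(o_1,o_2)=\min_{\mathrm{lex}}\{(o(b_1),o(b_2)):(b_1,b_2)\in\mathcal{B}\}$; $r_1=1+p^{m-o_1}$; $r_2=1+p^{m-o_2}$ if $o_2>o_1$, else $r_2=r_1^{p^{o_1-o_2}}$. $\mathcal{B}_r$ is the set of bases with $x^{b_i}=x^{r_i}$ for all $x\in G'$. For $b\in\mathcal{B}$, $|b_i|=p^{n_i+o'_i(b)}$ defines $o'_i(b)$; $(o'_1,o'_2)=\max_{\mathrm{lex}}\{(o'_1(b),o'_2(b)):b\in\mathcal{B}_r\}$.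 Fix $(b_1,b_2)\in\mathcal{B}_r$ with $(o'_1(b),o'_2(b))=(o'_1,o'_2)$ and put $a=[b_2,b_1]$ (a generator of $G'$, of order $p^m$). *)

theory Defs
  imports "HOL-Algebra.Algebra"
begin

definition commutator :: "('a,'b) monoid_scheme \<Rightarrow> 'a \<Rightarrow> 'a \<Rightarrow> 'a" where
  "commutator G x y = inv\<^bsub>G\<^esub> x \<otimes>\<^bsub>G\<^esub> inv\<^bsub>G\<^esub> y \<otimes>\<^bsub>G\<^esub> x \<otimes>\<^bsub>G\<^esub> y"

definition conj :: "('a,'b) monoid_scheme \<Rightarrow> 'a \<Rightarrow> 'a \<Rightarrow> 'a" where
  "conj G x y = inv\<^bsub>G\<^esub> y \<otimes>\<^bsub>G\<^esub> x \<otimes>\<^bsub>G\<^esub> y"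

abbreviation derived_subgroup :: "('a,'b) monoid_scheme \<Rightarrow> 'a set" where
  "derived_subgroup G \<equiv> derived G (carrier G)"

definition center :: "('a,'b) monoid_scheme \<Rightarrow> 'a set" where
  "center G = {z \<in> carrier G. \<forall>g \<in> carrier G. z \<otimes>\<^bsub>G\<^esub> g = g \<otimes>\<^bsub>G\<^esub> z}"

definition centralizer :: "('a,'b) monoid_scheme \<Rightarrow> 'a set \<Rightarrow> 'a set" where
  "centralizer G H = {g \<in> carrier G. \<forall>h \<in> H. g \<otimes>\<^bsub>G\<^esub> h = h \<otimes>\<^bsub>G\<^esub> g}"

definition comm_subgroup :: "('a,'b) monoid_scheme \<Rightarrow> 'a set \<Rightarrow> 'a set \<Rightarrow> 'a set" where
  "comm_subgroup G H K = generate G {commutator G h k | h k. h \<in> H \<and> k \<in> K}"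

(* lower central series: gamma G 1 = G, gamma G (i+1) = [gamma G i, G];
   (gamma G 0 is also set to G; it is never used) *)
fun gamma_aux :: "('a,'b) monoid_scheme \<Rightarrow> nat \<Rightarrow> 'a set" where
  "gamma_aux G 0 = carrier G"
| "gamma_aux G (Suc n) = comm_subgroup G (gamma_aux G n) (carrier G)"

definition gamma :: "('a,'b) monoid_scheme \<Rightarrow> nat \<Rightarrow> 'a set" where
  "gamma G i = gamma_aux G (i - 1)"

definition nilpotency_class :: "('a,'b) monoid_scheme \<Rightarrow> nat" where
  "nilpotency_class G = (LEAST c. gamma G (Suc c) = {\<one>\<^bsub>G\<^esub>})"

definition group_exponent :: "('a,'b) monoid_scheme \<Rightarrow> nat" where
  "group_exponent G = (LEAST n. 0 < n \<and> (\<forall>g \<in> carrier G. g [^]\<^bsub>G\<^esub> n = \<one>\<^bsub>G\<^esub>))"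

definition is_basis :: "('a,'b) monoid_scheme \<Rightarrow> nat \<Rightarrow> nat \<Rightarrow> nat \<Rightarrow> 'a \<Rightarrow> 'a \<Rightarrow> bool" where
  "is_basis G p n1 n2 b1 b2 \<longleftrightarrow>
     (let D = derived_subgroup G; Q = G Mod D; c1 = D #>\<^bsub>G\<^esub> b1; c2 = D #>\<^bsub>G\<^esub> b2 in
      b1 \<in> carrier G \<and> b2 \<in> carrier G \<and>
      generate Q {c1, c2} = carrier Q \<and>
      generate Q {c1} \<inter> generate Q {c2} = {\<one>\<^bsub>Q\<^esub>} \<and>
      group.ord Q c1 = p ^ n1 \<and> group.ord Q c2 = p ^ n2)"

definition ocen :: "('a,'b) monoid_scheme \<Rightarrow> nat \<Rightarrow> 'a \<Rightarrow> nat" where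
  "ocen G p g = (let C = centralizer G (derived_subgroup G) in
                 THE k. group.ord (G Mod C) (C #>\<^bsub>G\<^esub> g) = p ^ k)"

(* (o1,o2): lexicographic minimum of (o(b1),o(b2)) over bases *)
definition o1 :: "('a,'b) monoid_scheme \<Rightarrow> nat \<Rightarrow> nat \<Rightarrow> nat \<Rightarrow> nat" where
  "o1 G p n1 n2 = Min {ocen G p b1 | b1 b2. is_basis G p n1 n2 b1 b2}"

definition o2 :: "('a,'b) monoid_scheme \<Rightarrow> nat \<Rightarrow> nat \<Rightarrow> nat \<Rightarrow> nat" where
  "o2 G p n1 n2 = Min {ocen G p b2 | b1 b2. is_basis G p n1 n2 b1 b2 \<and> ocen G p b1 = o1 G p n1 n2}"

definition r1 :: "('a,'b) monoid_scheme \<Rightarrow> nat \<Rightarrow> nat \<Rightarrow> nat \<Rightarrow> nat \<Rightarrow> nat" where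
  "r1 G p m n1 n2 = 1 + p ^ (m - o1 G p n1 n2)"

definition r2 :: "('a,'b) monoid_scheme \<Rightarrow> nat \<Rightarrow> nat \<Rightarrow> nat \<Rightarrow> nat \<Rightarrow> nat" where
  "r2 G p m n1 n2 =
     (if o2 G p n1 n2 > o1 G p n1 n2 then 1 + p ^ (m - o2 G p n1 n2)
      else r1 G p m n1 n2 ^ (p ^ (o1 G p n1 n2 - o2 G p n1 n2)))"

definition is_basis_r :: "('a,'b) monoid_scheme \<Rightarrow> nat \<Rightarrow> nat \<Rightarrow> nat \<Rightarrow> nat \<Rightarrow> 'a \<Rightarrow> 'a \<Rightarrow> bool" where
  "is_basis_r G p m n1 n2 b1 b2 \<longleftrightarrow>
     is_basis G p n1 n2 b1 b2 \<and>
     (\<forall>x \<in> derived_subgroup G.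
        conj G x b1 = x [^]\<^bsub>G\<^esub> r1 G p m n1 n2 \<and>
        conj G x b2 = x [^]\<^bsub>G\<^esub> r2 G p m n1 n2)"

definition oprime :: "('a,'b) monoid_scheme \<Rightarrow> nat \<Rightarrow> nat \<Rightarrow> 'a \<Rightarrow> nat" where
  "oprime G p n b = (THE k. group.ord G b = p ^ (n + k))"

(* (o'1,o'2): lexicographic maximum over B_r *)
definition o1' :: "('a,'b) monoid_scheme \<Rightarrow> nat \<Rightarrow> nat \<Rightarrow> nat \<Rightarrow> nat \<Rightarrow> nat" where
  "o1' G p m n1 n2 = Max {oprime G p n1 b1 | b1 b2. is_basis_r G p m n1 n2 b1 b2}"

definition o2' :: "('a,'b) monoid_scheme \<Rightarrow> nat \<Rightarrow> nat \<Rightarrow> nat \<Rightarrow> nat \<Rightarrow> nat" where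
  "o2' G p m n1 n2 = Max {oprime G p n2 b2 | b1 b2. is_basis_r G p m n1 n2 b1 b2
                              \<and> oprime G p n1 b1 = o1' G p m n1 n2}"

end

theory Submission
  imports Defs "HOL-Computational_Algebra.Primes"
begin

lemma fermat_nat:
  assumes p: "Factorial_Ring.prime (p::nat)" shows "x ^ p mod p = x mod p"
proof (induction x)
  case 0
  then show ?case using prime_gt_0_nat[OF p] by (simp add: power_0_left)
next
  case (Suc x)
  obtain q where q: "p = Suc q" using prime_gt_0_nat[OF p] gr0_implies_Suc by blast
  have q0: "q \<noteq> 0" using q prime_gt_1_nat[OF p] by simp
  have bin: "(x + 1) ^ p = (\<Sum>k\<le>p. (p choose k) * x ^ k)"
    using binomial_ring[of x 1 p] by simp
  have "(\<Sum>k\<le>p. (p choose k) * x ^ k) = (\<Sum>k\<le>q. (p choose k) * x ^ k) + x ^ p"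
    using q by simp
  also have "(\<Sum>k\<le>q. (p choose k) * x ^ k) = 1 + (\<Sum>k\<in>{1..q}. (p choose k) * x ^ k)"
  proof -
    have "{..q} = insert 0 {1..q}" by auto
    then show ?thesis by simp
  qed
  finally have e: "(x + 1) ^ p = 1 + (\<Sum>k\<in>{1..q}. (p choose k) * x ^ k) + x ^ p" using bin by simp
  have "p dvd (\<Sum>k\<in>{1..q}. (p choose k) * x ^ k)"
  proof (rule dvd_sum)
    fix k assume "k \<in> {1..q}"
    then have "p dvd (p choose k)" using dvd_choose_prime[of k p] p q by auto
    then show "p dvd (p choose k) * x ^ k" by simp
  qed
  then obtain c where c: "(\<Sum>k\<in>{1..q}. (p choose k) * x ^ k) = p * c" by blast
  have "(x + 1) ^ p = (1 + x ^ p) + c * p" using e c by simp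
  then have "(x + 1) ^ p mod p = (1 + x ^ p) mod p" by simp
  also have "\<dots> = (1 + x) mod p" using mod_add_right_eq[of 1 "x^p" p] mod_add_right_eq[of 1 x p] Suc.IH by simp
  finally show ?case by simp
qed

lemma fermat_pow_nat:
  assumes p: "Factorial_Ring.prime (p::nat)" shows "x ^ (p ^ k) mod p = x mod p"
proof (induction k)
  case 0 then show ?case by simp
next
  case (Suc k)
  have "x ^ (p ^ Suc k) = (x ^ (p ^ k)) ^ p" by (metis power_Suc2 power_mult)
  then have "x ^ (p ^ Suc k) mod p = (x ^ (p ^ k)) mod p" using fermat_nat[OF p] by simp
  then show ?case using Suc.IH by simp
qed

definition gsum :: "nat \<Rightarrow> nat \<Rightarrow> nat" where
  "gsum n t = (\<Sum>k<n. t ^ k)"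

lemma gsum_0[simp]: "gsum 0 t = 0" by (simp add: gsum_def)

lemma gsum_Suc: "gsum (Suc n) t = 1 + t * gsum n t"
  unfolding gsum_def sum.lessThan_Suc_shift by (simp add: sum_distrib_left)

lemma gsum_Suc2: "gsum (Suc n) t = gsum n t + t ^ n"
  unfolding gsum_def by simp

lemma gsum_add: "gsum (n + k) t = gsum n t + t ^ n * gsum k t"
  by (induction k) (simp_all add: gsum_Suc2 algebra_simps power_add)

lemma gsum_mult: "gsum (a * b) t = gsum a t * gsum b (t ^ a)"
proof (induction b)
  case 0 then show ?case by simp
next
  case (Suc b)
  have "gsum (a * Suc b) t = gsum (a * b + a) t" by (simp add: algebra_simps)
  also have "\<dots> = gsum (a*b) t + t ^ (a*b) * gsum a t" by (rule gsum_add)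
  also have "\<dots> = gsum a t * (gsum b (t ^ a) + (t ^ a) ^ b)"
    using Suc.IH by (simp add: algebra_simps power_mult)
  also have "\<dots> = gsum a t * gsum (Suc b) (t ^ a)" by (simp add: gsum_Suc2)
  finally show ?case .
qed

lemma gsum_mod: assumes "t mod q = 1 mod q" shows "gsum n t mod q = n mod q"
proof (induction n)
  case 0 then show ?case by simp
next
  case (Suc n)
  have "gsum (Suc n) t mod q = (gsum n t + t ^ n) mod q" by (simp add: gsum_Suc2)
  also have "\<dots> = (n + 1) mod q"
  proof -
    have "t ^ n mod q = (t mod q) ^ n mod q" by (simp add: power_mod)
    also have "\<dots> = (1 mod q) ^ n mod q" using assms by simp
    also have "\<dots> = 1 mod q" by (simp add: power_mod)
    finally have "t ^ n mod q = 1 mod q" .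
    from mod_add_cong[OF Suc.IH this] show ?thesis by simp
  qed
  finally show ?case by simp
qed

lemma gsum_dvd_diff: "(t - 1) * gsum n t = t ^ n - 1"
proof (induction n)
  case 0 then show ?case by simp
next
  case (Suc n)
  show ?case
  proof (cases "t = 0")
    case True then show ?thesis by (simp add: gsum_Suc)
  next
    case False
    then have "t ^ n \<ge> 1" by simp
    have "(t - 1) * gsum (Suc n) t = (t - 1) * gsum n t + (t - 1) * t ^ n" by (simp add: gsum_Suc2 algebra_simps)
    also have "\<dots> = t ^ n - 1 + (t * t^n - t^n)" using Suc.IH by (simp add: algebra_simps diff_mult_distrib)
    also have "\<dots> = t ^ Suc n - 1" using \<open>t^n \<ge> 1\<close> False by (simp add: algebra_simps)
    finally show ?thesis .
  qed
qed

lemma two_sum_less: "2 * (\<Sum>k<n. k) = (n::nat) * (n - 1)"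
proof (induction n)
  case 0 then show ?case by simp
next
  case (Suc n) then show ?case by (cases n) (simp_all add: algebra_simps)
qed

lemma gsum_p_mod:
  assumes p: "Factorial_Ring.prime (p::nat)" and odd: "odd p" and t: "t mod p = 1"
  shows "gsum p t mod p^2 = p"
proof -
  have p1: "p > 1" using prime_gt_1_nat[OF p] .
  obtain s where ts: "t = 1 + p * s" using t by (metis add.commute mult.commute div_mult_mod_eq)
  have pw: "t ^ k mod p^2 = (1 + k * p * s) mod p^2" for k
  proof (induction k)
    case 0 then show ?case by simp
  next
    case (Suc k)
    have "t ^ Suc k = t ^ k * t" by (rule power_Suc2)
    then have "t ^ Suc k mod p^2 = ((t ^ k mod p^2) * t) mod p^2" by (simp only: mod_mult_left_eq)
    also have "\<dots> = ((1 + k * p * s) mod p^2 * t) mod p^2" using Suc.IH by simp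
    also have "\<dots> = ((1 + k * p * s) * (1 + p * s)) mod p^2" by (simp only: mod_mult_left_eq ts)
    also have "(1 + k * p * s) * (1 + p * s) = (1 + Suc k * p * s) + (k * s * s) * p^2"
      by (simp add: algebra_simps power2_eq_square)
    also have "((1 + Suc k * p * s) + (k * s * s) * p^2) mod p^2 = (1 + Suc k * p * s) mod p^2"
      by simp
    finally show ?case .
  qed
  have "gsum p t mod p^2 = (\<Sum>k<p. t ^ k mod p^2) mod p^2" unfolding gsum_def by (simp add: mod_sum_eq)
  also have "\<dots> = (\<Sum>k<p. (1 + k * p * s) mod p^2) mod p^2" using pw by simp
  also have "\<dots> = (\<Sum>k<p. (1 + k * p * s)) mod p^2" by (simp add: mod_sum_eq)
  also have "(\<Sum>k<p. (1 + k * p * s)) = (\<Sum>k<p. 1) + (\<Sum>k<p. k * (p * s))"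
    unfolding mult.assoc by (rule sum.distrib)
  also have "\<dots> = p + (\<Sum>k<p. k) * (p * s)" by (simp add: sum_distrib_right)
  also have "(\<Sum>k<p. k) = p * ((p - 1) div 2)"
  proof -
    have "2 * (\<Sum>k<p. k) = p * (p - 1)" by (rule two_sum_less)
    moreover have "even (p - 1)" using odd p1 by simp
    ultimately show ?thesis by (metis dvd_mult_div_cancel mult.left_commute mult_cancel_left zero_neq_numeral)
  qed
  also have "p + p * ((p - 1) div 2) * (p * s) = p + ((p - 1) div 2 * s) * p^2"
    by (simp add: algebra_simps power2_eq_square)
  also have "(p + ((p - 1) div 2 * s) * p^2) mod p^2 = p mod p^2" by simp
  also have "p mod p^2 = p" using p1 by (simp add: power2_eq_square)
  finally show ?thesis .
qed

lemma gsum_pp: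
  assumes p: "Factorial_Ring.prime (p::nat)" and odd: "odd p" and t: "t mod p = 1"
  shows "\<exists>w. gsum (p ^ K) t = p ^ K * w \<and> \<not> p dvd w"
proof (induction K)
  case 0
  then show ?case using p by (auto simp: gsum_def intro!: exI[of _ 1])
next
  case (Suc K)
  then obtain w where w: "gsum (p ^ K) t = p ^ K * w" "\<not> p dvd w" by blast
  have p1: "p > 1" using prime_gt_1_nat[OF p] .
  have "t ^ (p ^ K) mod p = (t mod p) ^ (p ^ K) mod p" by (simp add: power_mod)
  then have tK: "t ^ (p ^ K) mod p = 1" using t p1 by simp
  have g: "gsum p (t ^ (p ^ K)) mod p^2 = p" by (rule gsum_p_mod[OF p odd tK])
  obtain c where c: "gsum p (t ^ (p ^ K)) = p^2 * c + p" using g by (metis div_mult_mod_eq mult.commute)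
  have nd: "\<not> p dvd (p * c + 1)"
  proof
    assume "p dvd p * c + 1"
    then have "p dvd (p * c + 1) - p * c" using dvd_diff_nat[of p "p * c + 1" "p * c"] by simp
    then have "p dvd 1" by simp
    then show False using p1 by simp
  qed
  have "gsum (p ^ Suc K) t = gsum (p ^ K * p) t" by (simp add: mult.commute)
  also have "\<dots> = gsum (p ^ K) t * gsum p (t ^ (p ^ K))" by (rule gsum_mult)
  also have "\<dots> = p ^ Suc K * (w * (p * c + 1))" using w c by (simp add: algebra_simps power2_eq_square)
  finally show ?case using nd w(2) p by (metis prime_dvd_mult_iff)
qed

lemma E_step:
  fixes p n E R S :: nat
  assumes R: "R mod p = 1 mod p" and S: "S mod p = 1 mod p" and E: "(2 * E) mod p = (n * (n - 1)) mod p"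
  shows "(2 * ((gsum n S + E * R) * S)) mod p = (Suc n * (Suc n - 1)) mod p"
proof -
  have a: "gsum n S mod p = n mod p" by (rule gsum_mod[OF S])
  have b: "(E * R) mod p = E mod p" using mod_mult_cong[OF refl R, of E] by simp
  have c: "(gsum n S + E * R) mod p = (n + E) mod p" by (rule mod_add_cong[OF a b])
  have d: "((gsum n S + E * R) * S) mod p = (n + E) mod p" using mod_mult_cong[OF c S] by simp
  have "(2 * ((gsum n S + E * R) * S)) mod p = (2 * (n + E)) mod p" using mod_mult_cong[OF refl d, of 2] by simp
  also have "\<dots> = (2 * n + 2 * E) mod p" by (simp add: algebra_simps)
  also have "\<dots> = (2 * n + n * (n - 1)) mod p" using mod_add_cong[OF refl E, of "2*n"] by simp
  also have "2 * n + n * (n - 1) = Suc n * (Suc n - 1)" by (cases n) (simp_all add: algebra_simps)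
  finally show ?thesis .
qed

context group begin

lemma lcanc[simp]: "x \<in> carrier G \<Longrightarrow> y \<in> carrier G \<Longrightarrow> inv x \<otimes> (x \<otimes> y) = y"
  by (simp add: m_assoc[symmetric])
lemma lcanc2[simp]: "x \<in> carrier G \<Longrightarrow> y \<in> carrier G \<Longrightarrow> x \<otimes> (inv x \<otimes> y) = y"
  by (simp add: m_assoc[symmetric])

lemma conj_closed[simp]: "x \<in> carrier G \<Longrightarrow> g \<in> carrier G \<Longrightarrow> conj G x g \<in> carrier G"
  by (simp add: conj_def)
lemma comm_closed[simp]: "x \<in> carrier G \<Longrightarrow> g \<in> carrier G \<Longrightarrow> commutator G x g \<in> carrier G"
  by (simp add: commutator_def)

lemma conj_one[simp]: "x \<in> carrier G \<Longrightarrow> conj G x \<one> = x"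
  by (simp add: conj_def)

lemma conj_mult: "x \<in> carrier G \<Longrightarrow> g \<in> carrier G \<Longrightarrow> h \<in> carrier G \<Longrightarrow>
   conj G x (g \<otimes> h) = conj G (conj G x g) h"
  by (simp add: conj_def inv_mult_group m_assoc)

lemma conj_mult_left: "x \<in> carrier G \<Longrightarrow> y \<in> carrier G \<Longrightarrow> g \<in> carrier G \<Longrightarrow>
   conj G (x \<otimes> y) g = conj G x g \<otimes> conj G y g"
  by (simp add: conj_def m_assoc)

lemma conj_pow: "x \<in> carrier G \<Longrightarrow> g \<in> carrier G \<Longrightarrow>
   conj G (x [^] (n::nat)) g = (conj G x g) [^] n"
  by (induction n) (simp_all add: conj_mult_left, simp add: conj_def)

lemma conj_inv: "x \<in> carrier G \<Longrightarrow> g \<in> carrier G \<Longrightarrow> conj G (inv x) g = inv (conj G x g)"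
  by (simp add: conj_def inv_mult_group m_assoc)

lemma comm_eq: "x \<in> carrier G \<Longrightarrow> y \<in> carrier G \<Longrightarrow> commutator G x y = inv x \<otimes> conj G x y"
  by (simp add: commutator_def conj_def m_assoc)

lemma mult_conj: "u \<in> carrier G \<Longrightarrow> x \<in> carrier G \<Longrightarrow> x \<otimes> conj G u x = u \<otimes> x"
  by (simp add: conj_def m_assoc[symmetric])

lemma swap_comm: "x \<in> carrier G \<Longrightarrow> y \<in> carrier G \<Longrightarrow> x \<otimes> y = y \<otimes> x \<otimes> commutator G x y"
  by (simp add: commutator_def m_assoc)

lemma inv_comm: "x \<in> carrier G \<Longrightarrow> y \<in> carrier G \<Longrightarrow> inv (commutator G x y) = commutator G y x"
  by (simp add: commutator_def inv_mult_group m_assoc)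

lemma comm_mult_right: "x \<in> carrier G \<Longrightarrow> y \<in> carrier G \<Longrightarrow> z \<in> carrier G \<Longrightarrow>
  commutator G x (y \<otimes> z) = commutator G x z \<otimes> conj G (commutator G x y) z"
  by (simp add: commutator_def conj_def inv_mult_group m_assoc)

lemma comm_mult_left: "x \<in> carrier G \<Longrightarrow> x' \<in> carrier G \<Longrightarrow> y \<in> carrier G \<Longrightarrow>
  commutator G (x \<otimes> x') y = conj G (commutator G x y) x' \<otimes> commutator G x' y"
  by (simp add: commutator_def conj_def inv_mult_group m_assoc)

lemma comm_one_right[simp]: "x \<in> carrier G \<Longrightarrow> commutator G x \<one> = \<one>"
  by (simp add: commutator_def)
lemma comm_one_left[simp]: "x \<in> carrier G \<Longrightarrow> commutator G \<one> x = \<one>"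
  by (simp add: commutator_def)

lemma comm_in_derived_set: "x \<in> carrier G \<Longrightarrow> y \<in> carrier G \<Longrightarrow>
  commutator G x y \<in> derived_set G (carrier G)"
proof -
  assume x: "x \<in> carrier G" and y: "y \<in> carrier G"
  have "commutator G x y = inv x \<otimes> inv y \<otimes> inv (inv x) \<otimes> inv (inv y)"
    using x y by (simp add: commutator_def)
  then show ?thesis using x y by blast
qed

lemma derived_set_comm: "h \<in> derived_set G (carrier G) \<Longrightarrow>
  \<exists>x\<in>carrier G. \<exists>y\<in>carrier G. h = commutator G x y"
proof -
  assume "h \<in> derived_set G (carrier G)"
  then obtain h1 h2 where h: "h1 \<in> carrier G" "h2 \<in> carrier G" "h = h1 \<otimes> h2 \<otimes> inv h1 \<otimes> inv h2" by blast
  then have "h = commutator G (inv h1) (inv h2)" by (simp add: commutator_def)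
  then show ?thesis using h by blast
qed

lemma inv_pow_ord: assumes "finite (carrier G)" "x \<in> carrier G"
  shows "inv x = x [^] (ord x - 1)"
proof -
  have "ord x \<ge> 1" using ord_ge_1 assms by blast
  then have "x [^] (ord x - 1) \<otimes> x = \<one>" using assms nat_pow_Suc[of x "ord x - 1"] by simp
  then show ?thesis using assms by (metis inv_equality nat_pow_closed)
qed

lemma fin_subgroupI:
  assumes fin: "finite (carrier G)" and sub: "S \<subseteq> carrier G" and one: "\<one> \<in> S"
    and mult: "\<And>x y. x \<in> S \<Longrightarrow> y \<in> S \<Longrightarrow> x \<otimes> y \<in> S"
  shows "subgroup S G"
proof -
  have pow: "x [^] (n::nat) \<in> S" if "x \<in> S" for x n
    using that by (induction n) (simp_all add: one mult)
  show ?thesis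
  proof (rule subgroupI[OF sub])
    show "S \<noteq> {}" using one by blast
    fix x assume "x \<in> S"
    then show "inv x \<in> S" using inv_pow_ord[OF fin] sub pow by auto
  next
    fix x y assume "x \<in> S" "y \<in> S" then show "x \<otimes> y \<in> S" by (rule mult)
  qed
qed

end

locale lem35 = group G for G :: "('a, 'b) monoid_scheme" (structure) +
  fixes p m n1 n2 :: nat and b1 b2 :: 'a
  assumes fin: "finite (carrier G)"
    and p_prime: "Factorial_Ring.prime p" and p_odd: "odd p"
    and pgroup: "\<exists>k. order G = p ^ k"
    and nonabelian: "\<exists>x \<in> carrier G. \<exists>y \<in> carrier G. x \<otimes> y \<noteq> y \<otimes> x"
    and cyclic_derived: "\<exists>g \<in> derived_subgroup G. generate G {g} = derived_subgroup G"
    and m_def: "card (derived_subgroup G) = p ^ m"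
    and b_Br: "is_basis_r G p m n1 n2 b1 b2"
begin

abbreviation "D \<equiv> derived G (carrier G)"
abbreviation "R1 \<equiv> r1 G p m n1 n2"
abbreviation "R2 \<equiv> r2 G p m n1 n2"
abbreviation "O1 \<equiv> o1 G p n1 n2"
abbreviation "O2 \<equiv> o2 G p n1 n2"
abbreviation "Mx \<equiv> max O1 O2"
abbreviation "dd \<equiv> m - Mx"
abbreviation "a \<equiv> commutator G b2 b1"

definition act :: "'a \<Rightarrow> nat \<Rightarrow> bool" where
  "act g t \<longleftrightarrow> (\<forall>u\<in>D. conj G u g = u [^] t)"

lemma p1: "p > 1" using prime_gt_1_nat[OF p_prime] .
lemma p3: "p \<ge> 3" using p1 p_odd by (cases "p = 2") auto

lemma D_sub: "subgroup D G" by (rule derived_is_subgroup) simp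
lemma D_car: "D \<subseteq> carrier G" using D_sub subgroup.subset by blast
lemma D_normal: "D \<lhd> G" by (rule derived_is_normal[OF normal_self])

lemma comm_in_D: "x \<in> carrier G \<Longrightarrow> y \<in> carrier G \<Longrightarrow> commutator G x y \<in> D"
  unfolding derived_def by (rule generate.incl[OF comm_in_derived_set])

lemma finD: "finite D" using fin D_car finite_subset by blast

definition g0 where "g0 = (SOME g. g \<in> D \<and> generate G {g} = D)"
lemma g0': "g0 \<in> D \<and> generate G {g0} = D"
proof -
  have ex: "\<exists>g. g \<in> D \<and> generate G {g} = D" using cyclic_derived by blast
  show ?thesis unfolding g0_def by (rule someI_ex[OF ex])
qed
lemma g0: "g0 \<in> D" "generate G {g0} = D" using g0' by auto
lemma g0_car: "g0 \<in> carrier G" using g0 D_car by blast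
lemma D_pow: "D = {g0 [^] k | k. k \<in> (UNIV :: nat set)}"
  using generate_pow_on_finite_carrier[OF fin g0_car] g0 by simp
lemma ord_g0: "ord g0 = p ^ m"
  using generate_pow_card[OF g0_car] g0 m_def by simp

lemma D_comm: "u \<in> D \<Longrightarrow> v \<in> D \<Longrightarrow> u \<otimes> v = v \<otimes> u"
  using D_pow g0_car nat_pow_comm by auto

lemma m_pos: "m \<ge> 1"
proof (rule ccontr)
  assume "\<not> m \<ge> 1"
  then have "card D = 1" using m_def by simp
  then obtain z where "D = {z}" using card_1_singletonE by blast
  moreover have "\<one> \<in> D" using D_sub subgroup.one_closed by blast
  ultimately have D1: "D = {\<one>}" by simp
  obtain x y where xy: "x \<in> carrier G" "y \<in> carrier G" "x \<otimes> y \<noteq> y \<otimes> x" using nonabelian by blast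
  have "commutator G x y = \<one>" using comm_in_D[OF xy(1,2)] D1 by blast
  then show False using swap_comm[OF xy(1,2)] xy by simp
qed

lemma b_car: "b1 \<in> carrier G" "b2 \<in> carrier G"
  using b_Br unfolding is_basis_r_def is_basis_def Let_def by auto

lemma act_b: "act b1 R1" "act b2 R2"
  using b_Br unfolding is_basis_r_def act_def by auto

lemma pow_order: "x \<in> carrier G \<Longrightarrow> x [^] order G = \<one>"
  using pow_eq_id ord_dvd_group_order by blast

lemma act_mult: "g \<in> carrier G \<Longrightarrow> h \<in> carrier G \<Longrightarrow> act g t \<Longrightarrow> act h s \<Longrightarrow> act (g \<otimes> h) (t * s)"
  unfolding act_def
proof
  fix u assume g: "g \<in> carrier G" and h: "h \<in> carrier G" and ag: "\<forall>u\<in>D. conj G u g = u [^] t"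
    and ah: "\<forall>u\<in>D. conj G u h = u [^] s" and u: "u \<in> D"
  have uc: "u \<in> carrier G" using u D_car by blast
  have "conj G u (g \<otimes> h) = conj G (u [^] t) h" using conj_mult[OF uc g h] ag u by simp
  also have "\<dots> = (u [^] s) [^] t" using conj_pow[OF uc h] ah u by simp
  also have "\<dots> = u [^] (t * s)" using uc by (simp add: nat_pow_pow mult.commute)
  finally show "conj G u (g \<otimes> h) = u [^] (t * s)" .
qed

lemma act_one: "act \<one> 1"
  unfolding act_def using D_car by auto

lemma act_pow: "g \<in> carrier G \<Longrightarrow> act g t \<Longrightarrow> act (g [^] (j::nat)) (t ^ j)"
proof (induction j)
  case 0 then show ?case using act_one by simp
next
  case (Suc j)
  have "act (g [^] j \<otimes> g) (t ^ j * t)" using act_mult Suc by simp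
  then show ?case by (simp add: mult.commute)
qed

lemma act_mod_p: assumes g: "g \<in> carrier G" and ag: "act g t" and t: "t \<ge> 1"
  shows "t mod p = 1"
proof -
  obtain k where k: "order G = p ^ k" using pgroup by blast
  have "act (g [^] order G) (t ^ order G)" using act_pow[OF g ag] .
  then have "act \<one> (t ^ (p ^ k))" using pow_order[OF g] k by simp
  then have "conj G g0 \<one> = g0 [^] (t ^ (p ^ k))" using g0 unfolding act_def by blast
  then have "g0 [^] (t ^ (p ^ k)) = g0 [^] (1::nat)" using g0_car by simp
  then have "g0 [^] (t ^ (p ^ k) - 1) = \<one>" using pow_eq_div2 g0_car by blast
  then have "p ^ m dvd t ^ (p ^ k) - 1" using pow_eq_id g0_car ord_g0 by simp
  moreover have "p dvd p ^ m" using m_pos by (cases m) auto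
  ultimately have "p dvd t ^ (p ^ k) - 1" by (rule dvd_trans[rotated])
  moreover have "t ^ (p ^ k) \<ge> 1" using t by simp
  ultimately have "t ^ (p ^ k) mod p = 1 mod p"
    using mod_eq_dvd_iff_nat[of 1 "t ^ (p ^ k)" p] by simp
  then have "t mod p = 1 mod p" using fermat_pow_nat[OF p_prime] by simp
  then show ?thesis using p1 by simp
qed

lemma R1_def': "R1 = 1 + p ^ (m - O1)" by (simp add: r1_def)
lemma R1_ge: "R1 \<ge> 1" by (simp add: r1_def)
lemma R2_ge: "R2 \<ge> 1" by (simp add: r2_def r1_def)
lemma R1_p: "R1 mod p = 1" using act_mod_p[OF b_car(1) act_b(1) R1_ge] .
lemma R2_p: "R2 mod p = 1" using act_mod_p[OF b_car(2) act_b(2) R2_ge] .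

lemma O1_lt: "O1 < m"
proof (rule ccontr)
  assume "\<not> O1 < m"
  then have "R1 = 2" by (simp add: r1_def)
  then show False using R1_p p3 by simp
qed

lemma O2_lt: "O2 < m"
proof (cases "O2 > O1")
  case True
  show ?thesis
  proof (rule ccontr)
    assume "\<not> O2 < m"
    then have "R2 = 2" using True by (simp add: r2_def)
    then show False using R2_p p3 by simp
  qed
next
  case False then show ?thesis using O1_lt by simp
qed

lemma Mx_lt: "Mx < m" using O1_lt O2_lt by simp
lemma dd_pos: "dd \<ge> 1" using Mx_lt by (metis Suc_leI zero_less_diff One_nat_def)
lemma pdd: "p ^ dd > 1"
proof -
  have "0 < dd" using dd_pos by linarith
  then show ?thesis by (rule one_less_power[OF p1])
qed
lemma one_mod: "1 mod p ^ dd = 1" by (rule mod_less[OF pdd])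

lemma R1_dd: "R1 mod p ^ dd = 1"
proof -
  have "p ^ dd dvd p ^ (m - O1)" by (rule le_imp_power_dvd) simp
  then obtain c where "p ^ (m - O1) = p ^ dd * c" by blast
  then have R1e: "R1 = 1 + c * p ^ dd" by (simp add: r1_def mult.commute)
  have "R1 mod p ^ dd = 1 mod p ^ dd" unfolding R1e by (simp only: mod_mult_self1)
  then show ?thesis using one_mod by linarith
qed

lemma R2_dd: "R2 mod p ^ dd = 1"
proof (cases "O2 > O1")
  case True
  have "p ^ dd dvd p ^ (m - O2)" by (rule le_imp_power_dvd) simp
  then obtain c where "p ^ (m - O2) = p ^ dd * c" by blast
  then have R2e: "R2 = 1 + c * p ^ dd" using True by (simp add: r2_def mult.commute)
  have "R2 mod p ^ dd = 1 mod p ^ dd" unfolding R2e by (simp only: mod_mult_self1)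
  then show ?thesis using one_mod by linarith
next
  case False
  then have "R2 = R1 ^ (p ^ (O1 - O2))" by (simp add: r2_def)
  then have "R2 mod p ^ dd = (R1 mod p ^ dd) ^ (p ^ (O1 - O2)) mod p ^ dd" by (simp add: power_mod)
  then show ?thesis using R1_dd one_mod by simp
qed

lemma QG:
  assumes T: "subgroup T G" and t1: "b1 \<in> T" and t2: "b2 \<in> T" and DT: "D \<subseteq> T"
  shows "T = carrier G"
proof
  show "T \<subseteq> carrier G" using T subgroup.subset by blast
next
  interpret N: normal D G by (rule D_normal)
  have Qg: "group (G Mod D)" by (rule N.factorgroup_is_group)
  have hh: "group_hom G (G Mod D) (\<lambda>x. D #> x)"
    unfolding group_hom_def group_hom_axioms_def using is_group Qg N.r_coset_hom_Mod by blast
  have sT: "subgroup ((\<lambda>x. D #> x) ` T) (G Mod D)"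
    by (rule group_hom.subgroup_img_is_subgroup[OF hh T])
  have isb: "is_basis G p n1 n2 b1 b2" using b_Br unfolding is_basis_r_def by (rule conjunct1)
  have gen: "generate (G Mod D) {D #> b1, D #> b2} = carrier (G Mod D)"
    using isb unfolding is_basis_def Let_def by blast
  have "generate (G Mod D) {D #> b1, D #> b2} \<subseteq> (\<lambda>x. D #> x) ` T"
    by (rule group.generate_subgroup_incl[OF Qg _ sT]) (use t1 t2 in blast)
  then have sub: "carrier (G Mod D) \<subseteq> (\<lambda>x. D #> x) ` T" using gen by simp
  show "carrier G \<subseteq> T"
  proof
    fix x assume x: "x \<in> carrier G"
    have "D #> x \<in> carrier (G Mod D)" using x by (simp add: carrier_FactGroup)
    then have "D #> x \<in> (\<lambda>x. D #> x) ` T" using sub by (rule rev_subsetD)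
    then obtain t where t: "t \<in> T" "D #> x = D #> t" by (rule imageE) simp
    have "x \<in> D #> t" using rcos_self[OF x D_sub] t by simp
    then obtain d where d: "d \<in> D" "x = d \<otimes> t" unfolding r_coset_def by blast
    have "d \<in> T" using DT d(1) by (rule subsetD)
    then show "x \<in> T" using subgroup.m_closed[OF T, of d t] d(2) t(1) by simp
  qed
qed

definition goodset where "goodset = {g \<in> carrier G. \<exists>t. t mod p ^ dd = 1 \<and> act g t}"

lemma act_D: "u \<in> D \<Longrightarrow> act u 1"
  unfolding act_def
proof
  fix v assume u: "u \<in> D" and v: "v \<in> D"
  have uc: "u \<in> carrier G" and vc: "v \<in> carrier G" using u v D_car by auto
  have "conj G v u = inv u \<otimes> (v \<otimes> u)" using uc vc by (simp add: conj_def m_assoc)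
  also have "\<dots> = inv u \<otimes> (u \<otimes> v)" using D_comm[OF v u] by simp
  also have "\<dots> = v" using uc vc by simp
  finally show "conj G v u = v [^] (1::nat)" using vc by simp
qed

lemma good: assumes g: "g \<in> carrier G" shows "\<exists>t. t mod p ^ dd = 1 \<and> act g t"
proof -
  have "subgroup goodset G"
  proof (rule fin_subgroupI[OF fin])
    show "goodset \<subseteq> carrier G" unfolding goodset_def by blast
    show "\<one> \<in> goodset" unfolding goodset_def using act_one one_mod by blast
    fix x y assume x: "x \<in> goodset" and y: "y \<in> goodset"
    then obtain t s where ts: "t mod p ^ dd = 1" "act x t" "s mod p ^ dd = 1" "act y s" and
      xy: "x \<in> carrier G" "y \<in> carrier G" unfolding goodset_def by blast
    have "(t * s) mod p ^ dd = ((t mod p ^ dd) * (s mod p ^ dd)) mod p ^ dd" by (simp add: mod_mult_eq)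
    then have "(t * s) mod p ^ dd = 1" using ts one_mod by simp
    then show "x \<otimes> y \<in> goodset" unfolding goodset_def using act_mult[OF xy ts(2,4)] xy by blast
  qed
  moreover have "b1 \<in> goodset" unfolding goodset_def using b_car act_b R1_dd by blast
  moreover have "b2 \<in> goodset" unfolding goodset_def using b_car act_b R2_dd by blast
  moreover have "D \<subseteq> goodset" unfolding goodset_def using act_D D_car one_mod by blast
  ultimately have "goodset = carrier G" by (rule QG)
  then show ?thesis using g unfolding goodset_def by blast
qed

lemma good_p: assumes g: "g \<in> carrier G" shows "\<exists>t. t mod p = 1 \<and> act g t"
proof -
  obtain t where t: "t mod p ^ dd = 1" "act g t" using good[OF g] by blast
  have "p dvd p ^ dd" using dd_pos by (cases dd) auto
  then have "t mod p = 1 mod p" using t(1) by (metis mod_mod_cancel)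
  then show ?thesis using t p1 by auto
qed

lemma a_car: "a \<in> carrier G" using b_car by simp
lemma a_D: "a \<in> D" using comm_in_D b_car by simp

definition alpha where "alpha = (SOME k. a = g0 [^] (k::nat))"
lemma alpha: "a = g0 [^] alpha"
proof -
  have "\<exists>k. a = g0 [^] (k::nat)" using a_D D_pow by blast
  then show ?thesis unfolding alpha_def by (rule someI_ex)
qed

definition AH where "AH = {x. \<exists>i j. x = g0 [^] (alpha * i + p * j)}"

lemma g0pow_D: "g0 [^] (k::nat) \<in> D" using D_pow by blast

lemma AH_D: "AH \<subseteq> D" unfolding AH_def using g0pow_D by blast

lemma AH_sub: "subgroup AH G"
proof (rule fin_subgroupI[OF fin])
  show "AH \<subseteq> carrier G" using AH_D D_car by blast
  have "\<one> = g0 [^] (alpha * 0 + p * 0)" by simp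
  then show "\<one> \<in> AH" unfolding AH_def by blast
  fix x y assume "x \<in> AH" "y \<in> AH"
  then obtain i j i' j' where xy: "x = g0 [^] (alpha * i + p * j)" "y = g0 [^] (alpha * i' + p * j')"
    unfolding AH_def by blast
  have "x \<otimes> y = g0 [^] (alpha * i + p * j + (alpha * i' + p * j'))" using xy g0_car nat_pow_mult by simp
  also have "alpha * i + p * j + (alpha * i' + p * j') = alpha * (i + i') + p * (j + j')" by (simp add: algebra_simps)
  finally show "x \<otimes> y \<in> AH" unfolding AH_def by blast
qed

lemma AH_conj: assumes x: "x \<in> AH" and g: "g \<in> carrier G" shows "conj G x g \<in> AH"
proof -
  obtain t where t: "t mod p = 1" "act g t" using good_p[OF g] by blast
  obtain i j where xe: "x = g0 [^] (alpha * i + p * j)" using x unfolding AH_def by blast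
  have "x \<in> D" using x AH_D by blast
  then have "conj G x g = x [^] t" using t(2) unfolding act_def by blast
  also have "\<dots> = g0 [^] ((alpha * i + p * j) * t)" using xe g0_car nat_pow_pow by simp
  also have "(alpha * i + p * j) * t = alpha * (i * t) + p * (j * t)" by (simp add: algebra_simps)
  finally show ?thesis unfolding AH_def by blast
qed

lemma comm_D_left: assumes u: "u \<in> D" and g: "g \<in> carrier G" shows "commutator G u g \<in> AH"
proof -
  obtain t where t: "t mod p = 1" "act g t" using good_p[OF g] by blast
  obtain s where ts: "t = 1 + p * s" using t(1) by (metis add.commute mult.commute div_mult_mod_eq)
  obtain e where ue: "u = g0 [^] (e::nat)" using u D_pow by blast
  have uc: "u \<in> carrier G" using u D_car by blast
  have "commutator G u g = inv u \<otimes> conj G u g" using comm_eq[OF uc g] .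
  also have "conj G u g = u [^] t" using t(2) u unfolding act_def by blast
  also have "u [^] t = u \<otimes> u [^] (p * s)" using uc nat_pow_mult[of u 1 "p * s"] ts by simp
  also have "inv u \<otimes> (u \<otimes> u [^] (p * s)) = u [^] (p * s)" using uc by simp
  also have "\<dots> = g0 [^] (alpha * 0 + p * (e * s))" using ue g0_car nat_pow_pow by (simp add: algebra_simps)
  finally show ?thesis unfolding AH_def by blast
qed

lemma comm_D_right: assumes u: "u \<in> D" and g: "g \<in> carrier G" shows "commutator G g u \<in> AH"
proof -
  have uc: "u \<in> carrier G" using u D_car by blast
  have "inv (commutator G u g) \<in> AH" using subgroup.m_inv_closed[OF AH_sub comm_D_left[OF u g]] .
  then show ?thesis using inv_comm[OF uc g] by simp
qed

lemma comm_self[simp]: "x \<in> carrier G \<Longrightarrow> commutator G x x = \<one>"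
  by (simp add: commutator_def m_assoc)

lemma a_AH: "a \<in> AH"
proof -
  have "a = g0 [^] (alpha * 1 + p * 0)" using alpha by simp
  then show ?thesis unfolding AH_def by blast
qed

lemma T_all: assumes x: "x \<in> carrier G" and h1: "commutator G x b1 \<in> AH" and h2: "commutator G x b2 \<in> AH"
  and y: "y \<in> carrier G" shows "commutator G x y \<in> AH"
proof -
  let ?T = "{y \<in> carrier G. commutator G x y \<in> AH}"
  have "subgroup ?T G"
  proof (rule fin_subgroupI[OF fin])
    show "?T \<subseteq> carrier G" by blast
    show "\<one> \<in> ?T" using x subgroup.one_closed[OF AH_sub] by simp
    fix y z assume y: "y \<in> ?T" and z: "z \<in> ?T"
    have yc: "y \<in> carrier G" and zc: "z \<in> carrier G" using y z by auto
    have "commutator G x (y \<otimes> z) = commutator G x z \<otimes> conj G (commutator G x y) z"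
      by (rule comm_mult_right[OF x yc zc])
    moreover have "conj G (commutator G x y) z \<in> AH" using AH_conj y zc by blast
    moreover have "commutator G x z \<in> AH" using z by blast
    ultimately have "commutator G x (y \<otimes> z) \<in> AH" using subgroup.m_closed[OF AH_sub] by simp
    then show "y \<otimes> z \<in> ?T" using yc zc by simp
  qed
  moreover have "b1 \<in> ?T" using b_car h1 by simp
  moreover have "b2 \<in> ?T" using b_car h2 by simp
  moreover have "D \<subseteq> ?T" using comm_D_right x D_car by blast
  ultimately have "?T = carrier G" by (rule QG)
  then show ?thesis using y by blast
qed

lemma all_comm_AH: assumes x: "x \<in> carrier G" and y: "y \<in> carrier G" shows "commutator G x y \<in> AH"
proof -
  have ia: "inv a \<in> AH" using subgroup.m_inv_closed[OF AH_sub a_AH] .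
  have c12: "commutator G b1 b2 = inv a" using inv_comm[OF b_car(2) b_car(1)] by simp
  have one: "\<one> \<in> AH" using subgroup.one_closed[OF AH_sub] .
  have B1: "\<forall>y\<in>carrier G. commutator G b1 y \<in> AH"
    using T_all[OF b_car(1)] b_car one ia c12 by simp
  have B2: "\<forall>y\<in>carrier G. commutator G b2 y \<in> AH"
    using T_all[OF b_car(2)] b_car one a_AH by simp
  let ?S = "{x \<in> carrier G. \<forall>y\<in>carrier G. commutator G x y \<in> AH}"
  have "subgroup ?S G"
  proof (rule fin_subgroupI[OF fin])
    show "?S \<subseteq> carrier G" by blast
    show "\<one> \<in> ?S" using one by simp
    fix x x' assume xs: "x \<in> ?S" and xs': "x' \<in> ?S"
    have xc: "x \<in> carrier G" and xc': "x' \<in> carrier G" using xs xs' by auto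
    have "commutator G (x \<otimes> x') y \<in> AH" if y: "y \<in> carrier G" for y
    proof -
      have "commutator G (x \<otimes> x') y = conj G (commutator G x y) x' \<otimes> commutator G x' y"
        by (rule comm_mult_left[OF xc xc' y])
      moreover have "conj G (commutator G x y) x' \<in> AH" using AH_conj xs xc' y by blast
      moreover have "commutator G x' y \<in> AH" using xs' y by blast
      ultimately show ?thesis using subgroup.m_closed[OF AH_sub] by simp
    qed
    then show "x \<otimes> x' \<in> ?S" using xc xc' by simp
  qed
  moreover have "b1 \<in> ?S" using b_car B1 by simp
  moreover have "b2 \<in> ?S" using b_car B2 by simp
  moreover have "D \<subseteq> ?S" using comm_D_left D_car by blast
  ultimately have "?S = carrier G" by (rule QG)
  then show ?thesis using x y by blast
qed

lemma D_AH: "D \<subseteq> AH"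
  unfolding derived_def
proof (rule generate_subgroup_incl[OF _ AH_sub])
  show "derived_set G (carrier G) \<subseteq> AH"
  proof
    fix h assume "h \<in> derived_set G (carrier G)"
    then obtain x y where "x \<in> carrier G" "y \<in> carrier G" "h = commutator G x y"
      using derived_set_comm by blast
    then show "h \<in> AH" using all_comm_AH by simp
  qed
qed

lemma not_p_alpha: "\<not> p dvd alpha"
proof
  assume pa: "p dvd alpha"
  have "g0 \<in> AH" using g0 D_AH by blast
  then obtain i j where e: "g0 = g0 [^] (alpha * i + p * j)" unfolding AH_def by blast
  define e where "e = alpha * i + p * j"
  have pe: "p dvd e" unfolding e_def using pa by simp
  show False
  proof (cases "e = 0")
    case True
    have "g0 = g0 [^] e" using e unfolding e_def .
    then have "g0 = \<one>" using True by simp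
    then have "ord g0 = 1" by simp
    moreover have "p ^ m > 1" using one_less_power[OF p1] m_pos by simp
    ultimately show False using ord_g0 m_pos p1 by simp
  next
    case False
    have "g0 [^] e = g0 [^] (1::nat)" using e e_def g0_car by simp
    then have "g0 [^] (e - 1) = \<one>" using pow_eq_div2 g0_car by blast
    then have "p ^ m dvd e - 1" using pow_eq_id g0_car ord_g0 by simp
    moreover have "p dvd p ^ m" using m_pos by (cases m) auto
    ultimately have "p dvd e - 1" by (rule dvd_trans[rotated])
    then have "p dvd e - (e - 1)" using pe by (rule dvd_diff_nat[rotated])
    then have "p dvd 1" using False by simp
    then show False using p1 by simp
  qed
qed

lemma ord_a: "ord a = p ^ m"
proof -
  have a0: "alpha \<noteq> 0" using not_p_alpha by (metis dvd_0_right)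
  have "coprime p alpha" using prime_imp_coprime[OF p_prime not_p_alpha] .
  then have "coprime (p ^ m) alpha" by simp
  then have "gcd (p ^ m) alpha = 1" by simp
  then show ?thesis using ord_pow_gen[OF g0_car, of alpha] alpha ord_g0 a0 by simp
qed

lemma gen_a: "generate G {a} = D"
proof -
  have sub: "generate G {a} \<subseteq> D" using generate_subgroup_incl[OF _ D_sub] a_D by simp
  have "card (generate G {a}) = p ^ m" using generate_pow_card[OF a_car] ord_a by simp
  then have "card (generate G {a}) = card D" using m_def by simp
  then show ?thesis using card_subset_eq[OF finD sub] by simp
qed

lemma D_a: "D = {a [^] k | k. k \<in> (UNIV :: nat set)}"
  using generate_pow_on_finite_carrier[OF fin a_car] gen_a by simp

end

context lem35 begin

lemma comm_act: assumes u: "u \<in> D" and g: "g \<in> carrier G" and ag: "act g (1 + w)"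
  shows "commutator G u g = u [^] w"
proof -
  have uc: "u \<in> carrier G" using u D_car by blast
  have "commutator G u g = inv u \<otimes> conj G u g" using comm_eq[OF uc g] .
  also have "conj G u g = u [^] (1 + w)" using ag u unfolding act_def by blast
  also have "u [^] (1 + w) = u \<otimes> u [^] w" using uc nat_pow_mult[of u 1 w] by simp
  also have "inv u \<otimes> (u \<otimes> u [^] w) = u [^] w" using uc by simp
  finally show ?thesis .
qed

lemma good_dd: assumes g: "g \<in> carrier G" shows "\<exists>c. act g (1 + p ^ dd * c)"
proof -
  obtain t where t: "t mod p ^ dd = 1" "act g t" using good[OF g] by blast
  have "t = 1 + p ^ dd * (t div p ^ dd)" using t(1) by (metis add.commute div_mult_mod_eq mult.commute)
  then show ?thesis using t(2) by metis
qed

lemma exact_b: "\<exists>b. b \<in> carrier G \<and> act b (1 + p ^ dd)"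
proof (cases "O2 > O1")
  case True
  then have "R2 = 1 + p ^ dd" by (simp add: r2_def max_def)
  then show ?thesis using b_car act_b by metis
next
  case False
  then have "R1 = 1 + p ^ dd" by (simp add: r1_def max_def)
  then show ?thesis using b_car act_b by metis
qed

lemma apow_one_iff: "a [^] (k::nat) = \<one> \<longleftrightarrow> p ^ m dvd k"
  using pow_eq_id[OF a_car] ord_a by simp

lemma comm_iff_conj: "x \<in> carrier G \<Longrightarrow> g \<in> carrier G \<Longrightarrow> x \<otimes> g = g \<otimes> x \<longleftrightarrow> conj G x g = x"
proof
  assume x: "x \<in> carrier G" and g: "g \<in> carrier G" and c: "x \<otimes> g = g \<otimes> x"
  have "conj G x g = inv g \<otimes> (x \<otimes> g)" using x g by (simp add: conj_def m_assoc)
  also have "\<dots> = x" using c x g by simp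
  finally show "conj G x g = x" .
next
  assume x: "x \<in> carrier G" and g: "g \<in> carrier G" and c: "conj G x g = x"
  have "g \<otimes> conj G x g = x \<otimes> g" by (rule mult_conj[OF x g])
  then show "x \<otimes> g = g \<otimes> x" using c by simp
qed

lemma center_D: "center G \<inter> D = generate G {a [^] (p ^ Mx)}"
proof
  show "center G \<inter> D \<subseteq> generate G {a [^] (p ^ Mx)}"
  proof
    fix z assume z: "z \<in> center G \<inter> D"
    then obtain k where zk: "z = a [^] (k::nat)" using D_a by blast
    obtain b where b: "b \<in> carrier G" "act b (1 + p ^ dd)" using exact_b by blast
    have zc: "z \<in> carrier G" using zk a_car by simp
    have "z \<otimes> b = b \<otimes> z" using z b unfolding center_def by blast
    then have "conj G z b = z" using comm_iff_conj[OF zc b(1)] by simp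
    then have "commutator G z b = \<one>" using comm_eq[OF zc b(1)] zc by simp
    moreover have "commutator G z b = z [^] (p ^ dd)" using comm_act[OF _ b] z by blast
    ultimately have "a [^] (k * p ^ dd) = \<one>" using zk a_car nat_pow_pow by simp
    then have "p ^ m dvd k * p ^ dd" using apow_one_iff by simp
    moreover have "p ^ m = p ^ Mx * p ^ dd" using Mx_lt by (simp add: power_add[symmetric])
    ultimately have "p ^ Mx dvd k" using p1 by simp
    then obtain j where "k = p ^ Mx * j" by blast
    then have "z = (a [^] (p ^ Mx)) [^] j" using zk a_car nat_pow_pow by simp
    then show "z \<in> generate G {a [^] (p ^ Mx)}"
      using generate_pow_on_finite_carrier[OF fin, of "a [^] (p ^ Mx)"] a_car by auto
  qed
next
  show "generate G {a [^] (p ^ Mx)} \<subseteq> center G \<inter> D"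
  proof
    fix z assume "z \<in> generate G {a [^] (p ^ Mx)}"
    then obtain j where zj: "z = (a [^] (p ^ Mx)) [^] (j::nat)"
      using generate_pow_on_finite_carrier[OF fin, of "a [^] (p ^ Mx)"] a_car by auto
    then have zk: "z = a [^] (p ^ Mx * j)" using a_car nat_pow_pow by simp
    have zD: "z \<in> D" using zk D_a by blast
    have zc: "z \<in> carrier G" using zD D_car by blast
    let ?C = "{g \<in> carrier G. z \<otimes> g = g \<otimes> z}"
    have "subgroup ?C G"
    proof (rule fin_subgroupI[OF fin])
      show "?C \<subseteq> carrier G" by blast
      show "\<one> \<in> ?C" using zc by simp
      fix g h assume g: "g \<in> ?C" and h: "h \<in> ?C"
      have gc: "g \<in> carrier G" and hc: "h \<in> carrier G" using g h by auto
      have "z \<otimes> (g \<otimes> h) = (z \<otimes> g) \<otimes> h" using zc gc hc by (simp add: m_assoc)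
      also have "\<dots> = g \<otimes> (z \<otimes> h)" using g zc gc hc by (simp add: m_assoc)
      also have "\<dots> = (g \<otimes> h) \<otimes> z" using h zc gc hc by (simp add: m_assoc)
      finally show "g \<otimes> h \<in> ?C" using gc hc by simp
    qed
    moreover have "b \<in> ?C" if b: "b \<in> carrier G" for b
    proof -
      obtain c where c: "act b (1 + p ^ dd * c)" using good_dd[OF b] by blast
      have "commutator G z b = z [^] (p ^ dd * c)" using comm_act[OF zD b c] .
      also have "\<dots> = a [^] (p ^ Mx * j * (p ^ dd * c))" using zk a_car nat_pow_pow by simp
      also have "p ^ Mx * j * (p ^ dd * c) = p ^ m * (j * c)"
        using Mx_lt by (simp add: algebra_simps power_add[symmetric])
      also have "a [^] (p ^ m * (j * c)) = \<one>" using apow_one_iff by simp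
      finally have "commutator G z b = \<one>" .
      then have "conj G z b = z" using comm_eq[OF zc b] zc b
        by (metis inv_closed conj_closed l_one r_inv m_assoc inv_inv l_inv)
      then have "z \<otimes> b = b \<otimes> z" using comm_iff_conj[OF zc b] by simp
      then show ?thesis using b by simp
    qed
    then have "b1 \<in> ?C" "b2 \<in> ?C" "D \<subseteq> ?C" using b_car D_car by auto
    ultimately have "?C = carrier G" by (rule QG)
    then have "z \<in> center G" using zc unfolding center_def by blast
    then show "z \<in> center G \<inter> D" using zD by blast
  qed
qed

lemma gen_singleton: "x \<in> carrier G \<Longrightarrow> generate G {x} = {x [^] k | k. k \<in> (UNIV :: nat set)}"
  by (rule generate_pow_on_finite_carrier[OF fin])

lemma comm_set_carrier:
  "{commutator G h k | h k. h \<in> carrier G \<and> k \<in> carrier G} = derived_set G (carrier G)"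
proof
  show "{commutator G h k | h k. h \<in> carrier G \<and> k \<in> carrier G} \<subseteq> derived_set G (carrier G)"
    using comm_in_derived_set by blast
  show "derived_set G (carrier G) \<subseteq> {commutator G h k | h k. h \<in> carrier G \<and> k \<in> carrier G}"
  proof
    fix h assume "h \<in> derived_set G (carrier G)"
    then obtain x y where "x \<in> carrier G" "y \<in> carrier G" "h = commutator G x y" using derived_set_comm by blast
    then show "h \<in> {commutator G h k | h k. h \<in> carrier G \<and> k \<in> carrier G}" by blast
  qed
qed

lemma gamma2: "gamma G 2 = D"
proof -
  have "gamma G 2 = comm_subgroup G (carrier G) (carrier G)"
    by (simp add: gamma_def numeral_2_eq_2)
  also have "\<dots> = D" unfolding comm_subgroup_def derived_def comm_set_carrier ..
  finally show ?thesis .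
qed

lemma gamma_Suc: "i \<ge> 1 \<Longrightarrow> gamma G (Suc i) = comm_subgroup G (gamma G i) (carrier G)"
  by (cases i) (simp_all add: gamma_def)

lemma comm_step: "comm_subgroup G (generate G {a [^] (p ^ s)}) (carrier G) = generate G {a [^] (p ^ (s + dd))}"
proof -
  let ?X = "a [^] (p ^ s)" and ?Y = "a [^] (p ^ (s + dd))"
  have Xc: "?X \<in> carrier G" and Yc: "?Y \<in> carrier G" using a_car by auto
  let ?CS = "{commutator G h k | h k. h \<in> generate G {?X} \<and> k \<in> carrier G}"
  have CSc: "?CS \<subseteq> carrier G"
  proof
    fix x assume "x \<in> ?CS"
    then obtain h k where "x = commutator G h k" "h \<in> generate G {?X}" "k \<in> carrier G" by blast
    moreover have "generate G {?X} \<subseteq> carrier G" using generate_incl Xc by simp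
    ultimately show "x \<in> carrier G" by auto
  qed
  show ?thesis unfolding comm_subgroup_def
  proof
    show "generate G ?CS \<subseteq> generate G {?Y}"
    proof (rule generate_subgroup_incl[OF _ generate_is_subgroup])
      show "{?Y} \<subseteq> carrier G" using Yc by simp
      show "?CS \<subseteq> generate G {?Y}"
      proof
        fix x assume "x \<in> ?CS"
        then obtain h k where x: "x = commutator G h k" "h \<in> generate G {?X}" "k \<in> carrier G" by blast
        obtain j where hj: "h = ?X [^] (j::nat)" using x(2) gen_singleton[OF Xc] by blast
        have hD: "h \<in> D" using hj D_a a_car nat_pow_pow by auto
        obtain c where c: "act k (1 + p ^ dd * c)" using good_dd[OF x(3)] by blast
        have "x = h [^] (p ^ dd * c)" using comm_act[OF hD x(3) c] x(1) by simp
        also have "\<dots> = a [^] (p ^ s * j * (p ^ dd * c))" using hj a_car nat_pow_pow by simp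
        also have "p ^ s * j * (p ^ dd * c) = p ^ (s + dd) * (j * c)" by (simp add: algebra_simps power_add)
        also have "a [^] (p ^ (s + dd) * (j * c)) = ?Y [^] (j * c)" using a_car nat_pow_pow by simp
        finally show "x \<in> generate G {?Y}" using gen_singleton[OF Yc] by blast
      qed
    qed
  next
    show "generate G {?Y} \<subseteq> generate G ?CS"
    proof (rule generate_subgroup_incl[OF _ generate_is_subgroup[OF CSc]])
      obtain b where b: "b \<in> carrier G" "act b (1 + p ^ dd)" using exact_b by blast
      have XD: "?X \<in> D" using D_a by blast
      have "commutator G ?X b = ?X [^] (p ^ dd)" using comm_act[OF XD b] .
      also have "\<dots> = ?Y" using a_car nat_pow_pow by (simp add: power_add)
      finally have "?Y \<in> ?CS" using b generate.incl[of ?X "{?X}" G] by force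
      then show "{?Y} \<subseteq> generate G ?CS" using generate.incl[of ?Y ?CS G] by blast
    qed
  qed
qed

lemma gamma_formula: "i \<ge> 2 \<Longrightarrow> gamma G i = generate G {a [^] (p ^ ((i - 2) * dd))}"
proof (induction i rule: dec_induct)
  case base
  show ?case using gamma2 gen_a a_car by simp
next
  case (step i)
  have "gamma G (Suc i) = comm_subgroup G (gamma G i) (carrier G)" using gamma_Suc step by simp
  also have "\<dots> = generate G {a [^] (p ^ ((i - 2) * dd + dd))}" using step comm_step by simp
  also have "(i - 2) * dd + dd = (Suc i - 2) * dd"
  proof -
    have e: "Suc i - 2 = Suc (i - 2)" using step(1) by simp
    show ?thesis by (simp only: e mult_Suc add.commute)
  qed
  finally show ?case .
qed

lemma gen_one_iff: "x \<in> carrier G \<Longrightarrow> generate G {x} = {\<one>} \<longleftrightarrow> x = \<one>"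
proof
  assume x: "x \<in> carrier G" and "generate G {x} = {\<one>}"
  then show "x = \<one>" using generate.incl[of x "{x}" G] by blast
next
  assume x: "x \<in> carrier G" and "x = \<one>"
  then show "generate G {x} = {\<one>}" using gen_singleton[OF x] by auto
qed

lemma gamma1: "gamma G 1 = carrier G" by (simp add: gamma_def)

lemma carrier_not_one: "carrier G \<noteq> {\<one>}"
  using nonabelian by auto

lemma gamma_trivial_iff: "gamma G (Suc c) = {\<one>} \<longleftrightarrow> c \<ge> 1 \<and> m \<le> (c - 1) * dd"
proof (cases "c = 0")
  case True then show ?thesis using gamma1 carrier_not_one by simp
next
  case False
  then have "gamma G (Suc c) = generate G {a [^] (p ^ ((c - 1) * dd))}" using gamma_formula[of "Suc c"] by simp
  then have "gamma G (Suc c) = {\<one>} \<longleftrightarrow> a [^] (p ^ ((c - 1) * dd)) = \<one>" using gen_one_iff a_car by simp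
  also have "\<dots> \<longleftrightarrow> p ^ m dvd p ^ ((c - 1) * dd)" using apow_one_iff by simp
  also have "\<dots> \<longleftrightarrow> m \<le> (c - 1) * dd" using p1 by (simp add: dvd_power_iff)
  finally show ?thesis using False by simp
qed

lemma nil_class: "nilpotency_class G = 1 + nat \<lceil>real m / real dd\<rceil>"
proof -
  let ?q = "nat \<lceil>real m / real dd\<rceil>"
  have "0 < dd" using dd_pos by linarith
  then have ddp: "real dd > 0" by (simp only: of_nat_0_less_iff)
  have q1: "m \<le> ?q * dd"
  proof -
    have x0: "0 \<le> real m / real dd" by simp
    have "real ?q = real_of_int \<lceil>real m / real dd\<rceil>" using x0 by simp
    then have "real m / real dd \<le> real ?q" using le_of_int_ceiling by simp
    then have "real m \<le> real ?q * real dd" using pos_divide_le_eq[OF ddp] by blast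
    then show ?thesis by (metis of_nat_le_iff of_nat_mult)
  qed
  have q2: "?q \<le> c" if "m \<le> c * dd" for c
  proof -
    have "real m \<le> real c * real dd" using that by (metis of_nat_le_iff of_nat_mult)
    then have "real m / real dd \<le> real c" using pos_divide_le_eq[OF ddp] by blast
    then have "\<lceil>real m / real dd\<rceil> \<le> int c" by (simp only: ceiling_le_iff of_int_of_nat_eq)
    then show ?thesis by (simp only: nat_le_iff)
  qed
  show ?thesis unfolding nilpotency_class_def gamma_trivial_iff
  proof (rule Least_equality)
    show "1 + ?q \<ge> 1 \<and> m \<le> (1 + ?q - 1) * dd" using q1 by simp
    fix c assume h: "c \<ge> 1 \<and> m \<le> (c - 1) * dd"
    then have "?q \<le> c - 1" using q2 by blast
    then show "1 + ?q \<le> c" using h by linarith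
  qed
qed

end

context lem35 begin

lemma D_pow_closed: "u \<in> D \<Longrightarrow> u [^] (k::nat) \<in> D"
proof -
  assume "u \<in> D"
  then obtain j where "u = a [^] (j::nat)" using D_a by blast
  then have "u [^] k = a [^] (j * k)" using a_car nat_pow_pow by simp
  then show ?thesis using D_a by blast
qed

lemma D_c: "u \<in> D \<Longrightarrow> u \<in> carrier G" using D_car by blast

lemma move_D: assumes u: "u \<in> D" and g: "g \<in> carrier G" and ag: "act g t"
  shows "u \<otimes> g = g \<otimes> u [^] t"
proof -
  have "g \<otimes> conj G u g = u \<otimes> g" using mult_conj[OF D_c[OF u] g] .
  moreover have "conj G u g = u [^] t" using ag u unfolding act_def by blast
  ultimately show ?thesis by simp
qed

lemma pow_mult_D: assumes g: "g \<in> carrier G" and ag: "act g t" and u: "u \<in> D"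
  shows "(g \<otimes> u) [^] (n::nat) = g [^] n \<otimes> u [^] (gsum n t)"
proof (induction n)
  case 0 then show ?case using D_c[OF u] by (simp add: gsum_def)
next
  case (Suc n)
  have uc: "u \<in> carrier G" using D_c[OF u] .
  have us: "u [^] gsum n t \<in> D" using D_pow_closed[OF u] .
  have "(g \<otimes> u) [^] Suc n = (g [^] n \<otimes> u [^] gsum n t) \<otimes> (g \<otimes> u)" using Suc g uc by simp
  also have "\<dots> = g [^] n \<otimes> ((u [^] gsum n t \<otimes> g) \<otimes> u)" using g uc by (simp add: m_assoc)
  also have "u [^] gsum n t \<otimes> g = g \<otimes> (u [^] gsum n t) [^] t" using move_D[OF us g ag] .
  also have "(u [^] gsum n t) [^] t = u [^] (gsum n t * t)" using uc nat_pow_pow by simp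
  also have "g [^] n \<otimes> ((g \<otimes> u [^] (gsum n t * t)) \<otimes> u) = (g [^] n \<otimes> g) \<otimes> (u [^] (gsum n t * t) \<otimes> u)"
    using g uc by (simp add: m_assoc)
  also have "\<dots> = g [^] Suc n \<otimes> u [^] gsum (Suc n) t"
    using g uc by (simp add: gsum_Suc algebra_simps)
  finally show ?case .
qed

lemma comm_pow_left: assumes y: "y \<in> carrier G" and x: "x \<in> carrier G" and ay: "act y S"
  shows "commutator G (y [^] (n::nat)) x = (commutator G y x) [^] (gsum n S)"
proof -
  let ?d = "commutator G y x"
  have dD: "?d \<in> D" using comm_in_D[OF y x] .
  have dc: "?d \<in> carrier G" using D_c[OF dD] .
  have cy: "conj G y x = y \<otimes> ?d" using comm_eq[OF y x] y x by simp
  have "commutator G (y [^] n) x = inv (y [^] n) \<otimes> conj G (y [^] n) x" using comm_eq y x by simp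
  also have "conj G (y [^] n) x = (y \<otimes> ?d) [^] n" using conj_pow[OF y x] cy by simp
  also have "\<dots> = y [^] n \<otimes> ?d [^] gsum n S" using pow_mult_D[OF y ay dD] .
  also have "inv (y [^] n) \<otimes> (y [^] n \<otimes> ?d [^] gsum n S) = ?d [^] gsum n S" using y dc by simp
  finally show ?thesis .
qed

lemma pow_prod: assumes x: "x \<in> carrier G" and y: "y \<in> carrier G" and ax: "act x R" and ay: "act y S"
  and R: "R mod p = 1" and S: "S mod p = 1"
  shows "\<exists>E. (2 * E) mod p = (n * (n - 1)) mod p \<and>
     (x \<otimes> y) [^] n = x [^] n \<otimes> y [^] n \<otimes> (commutator G y x) [^] E"
proof (induction n)
  case 0
  have "(x \<otimes> y) [^] (0::nat) = x [^] (0::nat) \<otimes> y [^] (0::nat) \<otimes> (commutator G y x) [^] (0::nat)" by simp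
  then show ?case by (intro exI[of _ 0]) simp
next
  case (Suc n)
  let ?d = "commutator G y x"
  have dD: "?d \<in> D" using comm_in_D[OF y x] .
  have dc: "?d \<in> carrier G" using D_c[OF dD] .
  obtain E where E: "(2 * E) mod p = (n * (n - 1)) mod p"
    and IH: "(x \<otimes> y) [^] n = x [^] n \<otimes> y [^] n \<otimes> ?d [^] E" using Suc by blast
  let ?s = "gsum n S"
  have f1: "?d [^] E \<otimes> x = x \<otimes> ?d [^] (E * R)"
    using move_D[OF D_pow_closed[OF dD] x ax] dc nat_pow_pow by simp
  have f2: "y [^] n \<otimes> x = x \<otimes> (y [^] n \<otimes> ?d [^] ?s)"
    using swap_comm[OF nat_pow_closed[OF y] x] comm_pow_left[OF y x ay] x y dc by (simp add: m_assoc)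
  have f3: "?d [^] (?s + E * R) \<otimes> y = y \<otimes> ?d [^] ((?s + E * R) * S)"
    using move_D[OF D_pow_closed[OF dD] y ay] dc nat_pow_pow by simp
  have "(x \<otimes> y) [^] Suc n = (x [^] n \<otimes> y [^] n \<otimes> ?d [^] E) \<otimes> (x \<otimes> y)" using IH x y by simp
  also have "\<dots> = x [^] n \<otimes> (y [^] n \<otimes> ((?d [^] E \<otimes> x) \<otimes> y))" using x y dc by (simp add: m_assoc)
  also have "\<dots> = x [^] n \<otimes> (y [^] n \<otimes> ((x \<otimes> ?d [^] (E * R)) \<otimes> y))" using f1 by simp
  also have "\<dots> = x [^] n \<otimes> ((y [^] n \<otimes> x) \<otimes> (?d [^] (E * R) \<otimes> y))" using x y dc by (simp add: m_assoc)
  also have "\<dots> = x [^] n \<otimes> ((x \<otimes> (y [^] n \<otimes> ?d [^] ?s)) \<otimes> (?d [^] (E * R) \<otimes> y))" using f2 by simp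
  also have "\<dots> = (x [^] n \<otimes> x) \<otimes> (y [^] n \<otimes> ((?d [^] ?s \<otimes> ?d [^] (E * R)) \<otimes> y))" using x y dc by (simp add: m_assoc)
  also have "?d [^] ?s \<otimes> ?d [^] (E * R) = ?d [^] (?s + E * R)" using dc nat_pow_mult by simp
  also have "?d [^] (?s + E * R) \<otimes> y = y \<otimes> ?d [^] ((?s + E * R) * S)" using f3 .
  also have "(x [^] n \<otimes> x) \<otimes> (y [^] n \<otimes> (y \<otimes> ?d [^] ((?s + E * R) * S))) =
      x [^] Suc n \<otimes> y [^] Suc n \<otimes> ?d [^] ((?s + E * R) * S)" using x y dc by (simp add: m_assoc)
  finally have eq: "(x \<otimes> y) [^] Suc n = x [^] Suc n \<otimes> y [^] Suc n \<otimes> ?d [^] ((?s + E * R) * S)" .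
  have "(2 * ((?s + E * R) * S)) mod p = (Suc n * (Suc n - 1)) mod p"
    by (rule E_step) (use R S E p1 in simp_all)
  then show ?case using eq by blast
qed

lemma pow_prod_p: assumes x: "x \<in> carrier G" and y: "y \<in> carrier G"
  shows "\<exists>E. (x \<otimes> y) [^] p = x [^] p \<otimes> y [^] p \<otimes> (commutator G y x) [^] (p * E)"
proof -
  obtain R where R: "R mod p = 1" "act x R" using good_p[OF x] by blast
  obtain S where S: "S mod p = 1" "act y S" using good_p[OF y] by blast
  obtain E where E: "(2 * E) mod p = (p * (p - 1)) mod p"
    and eq: "(x \<otimes> y) [^] p = x [^] p \<otimes> y [^] p \<otimes> (commutator G y x) [^] E"
    using pow_prod[OF x y R(2) S(2) R(1) S(1)] by blast
  have "p dvd 2 * E" using E by (simp add: mod_eq_0_iff_dvd[symmetric])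
  moreover have "\<not> p dvd 2" using p3 by (simp add: nat_dvd_not_less)
  ultimately have "p dvd E" using p_prime prime_dvd_mult_iff by blast
  then obtain E' where "E = p * E'" by blast
  then show ?thesis using eq by blast
qed

lemma aD_pow: "u \<in> D \<Longrightarrow> \<exists>j. u = a [^] (j::nat)" using D_a by blast

lemma pow_pK: "\<forall>x\<in>carrier G. \<forall>y\<in>carrier G. \<exists>e.
   (x \<otimes> y) [^] (p ^ K) = x [^] (p ^ K) \<otimes> y [^] (p ^ K) \<otimes> a [^] (p ^ K * e)"
proof (induction K)
  case 0
  show ?case
  proof (intro ballI exI[of _ 0])
    fix x y assume "x \<in> carrier G" "y \<in> carrier G"
    then show "(x \<otimes> y) [^] (p ^ 0) = x [^] (p ^ 0) \<otimes> y [^] (p ^ 0) \<otimes> a [^] (p ^ 0 * 0)" by simp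
  qed
next
  case (Suc K)
  show ?case
  proof (intro ballI)
    fix x y assume x: "x \<in> carrier G" and y: "y \<in> carrier G"
    let ?N = "p ^ K"
    obtain e where e: "(x \<otimes> y) [^] ?N = x [^] ?N \<otimes> y [^] ?N \<otimes> a [^] (?N * e)" using Suc x y by blast
    let ?X = "x [^] ?N" and ?Y = "y [^] ?N" and ?c = "a [^] (?N * e)"
    have Xc: "?X \<in> carrier G" and Yc: "?Y \<in> carrier G" using x y by auto
    have cD: "?c \<in> D" using D_a by blast
    have Zc: "?X \<otimes> ?Y \<in> carrier G" using Xc Yc by simp
    obtain tZ where tZ: "tZ mod p = 1" "act (?X \<otimes> ?Y) tZ" using good_p[OF Zc] by blast
    have "(x \<otimes> y) [^] (p ^ Suc K) = (x \<otimes> y) [^] (?N * p)" by (simp only: power_Suc2)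
    also have "\<dots> = ((x \<otimes> y) [^] ?N) [^] p" using nat_pow_pow[of "x \<otimes> y" ?N p] x y by simp
    also have "\<dots> = ((?X \<otimes> ?Y) \<otimes> ?c) [^] p" using e by simp
    also have "\<dots> = (?X \<otimes> ?Y) [^] p \<otimes> ?c [^] gsum p tZ" using pow_mult_D[OF Zc tZ(2) cD] .
    finally have s1: "(x \<otimes> y) [^] (p ^ Suc K) = (?X \<otimes> ?Y) [^] p \<otimes> ?c [^] gsum p tZ" .
    obtain E where E: "(?X \<otimes> ?Y) [^] p = ?X [^] p \<otimes> ?Y [^] p \<otimes> (commutator G ?Y ?X) [^] (p * E)"
      using pow_prod_p[OF Xc Yc] by blast
    obtain S where S: "S mod p = 1" "act y S" using good_p[OF y] by blast
    have "commutator G ?Y ?X = (commutator G y ?X) [^] gsum ?N S" using comm_pow_left[OF y Xc S(2)] .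
    moreover obtain w where w: "gsum ?N S = ?N * w" using gsum_pp[OF p_prime p_odd S(1)] by blast
    moreover obtain j where j: "commutator G y ?X = a [^] (j::nat)" using aD_pow[OF comm_in_D[OF y Xc]] by blast
    ultimately have cYX: "commutator G ?Y ?X = a [^] (j * (?N * w))" using a_car nat_pow_pow by simp
    have "gsum p tZ mod p^2 = p" using gsum_p_mod[OF p_prime p_odd tZ(1)] .
    then have "p dvd gsum p tZ"
      by (metis dvd_mod_iff dvd_mult2 dvd_refl power2_eq_square)
    then obtain v where v: "gsum p tZ = p * v" by blast
    have "(x \<otimes> y) [^] (p ^ Suc K) = ?X [^] p \<otimes> ?Y [^] p \<otimes> (a [^] (j * (?N * w))) [^] (p * E) \<otimes> ?c [^] (p * v)"
      using s1 E cYX v by simp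
    also have "(a [^] (j * (?N * w))) [^] (p * E) = a [^] (p ^ Suc K * (j * w * E))"
      using a_car nat_pow_pow by (simp add: algebra_simps power_Suc2)
    also have "?c [^] (p * v) = a [^] (p ^ Suc K * (e * v))"
      using a_car nat_pow_pow by (simp add: algebra_simps power_Suc2)
    also have "?X [^] p = x [^] (p ^ Suc K)" using x nat_pow_pow by (simp add: mult.commute)
    also have "?Y [^] p = y [^] (p ^ Suc K)" using y nat_pow_pow by (simp add: mult.commute)
    also have "x [^] (p ^ Suc K) \<otimes> y [^] (p ^ Suc K) \<otimes> a [^] (p ^ Suc K * (j * w * E)) \<otimes> a [^] (p ^ Suc K * (e * v))
       = x [^] (p ^ Suc K) \<otimes> y [^] (p ^ Suc K) \<otimes> a [^] (p ^ Suc K * (j * w * E + e * v))"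
      using x y a_car by (simp add: m_assoc nat_pow_mult algebra_simps)
    finally show "\<exists>e. (x \<otimes> y) [^] (p ^ Suc K) = x [^] (p ^ Suc K) \<otimes> y [^] (p ^ Suc K) \<otimes> a [^] (p ^ Suc K * e)"
      by blast
  qed
qed

lemma m_le: assumes b2N: "b2 [^] (p ^ K) = \<one>" shows "m \<le> K"
proof -
  have "commutator G (b2 [^] (p ^ K)) b1 = a [^] gsum (p ^ K) R2"
    using comm_pow_left[OF b_car(2) b_car(1) act_b(2)] .
  then have "a [^] gsum (p ^ K) R2 = \<one>" using b2N b_car by simp
  then have dv: "p ^ m dvd gsum (p ^ K) R2" using apow_one_iff by simp
  obtain w where w: "gsum (p ^ K) R2 = p ^ K * w" "\<not> p dvd w" using gsum_pp[OF p_prime p_odd R2_p] by blast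
  have "coprime (p ^ m) w" using prime_imp_coprime[OF p_prime w(2)] by simp
  then have "p ^ m dvd p ^ K" using dv w(1) coprime_dvd_mult_left_iff by metis
  then show ?thesis using p1 by (simp add: dvd_power_iff)
qed

lemma exponent_formula: assumes o1: "ord b1 = p ^ e1" and o2: "ord b2 = p ^ e2"
  shows "group_exponent G = p ^ max e1 e2"
proof -
  let ?K = "max e1 e2"
  let ?N = "p ^ ?K"
  have d1: "ord b1 dvd ?N" using o1 by (simp add: le_imp_power_dvd)
  have d2: "ord b2 dvd ?N" using o2 by (simp add: le_imp_power_dvd)
  have b1N: "b1 [^] ?N = \<one>" using d1 pow_eq_id b_car by blast
  have b2N: "b2 [^] ?N = \<one>" using d2 pow_eq_id b_car by blast
  have mK: "m \<le> ?K" by (rule m_le[OF b2N])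
  have pmN: "p ^ m dvd ?N" using mK by (simp add: le_imp_power_dvd)
  have aN: "a [^] (?N * e) = \<one>" for e using apow_one_iff pmN by simp
  let ?O = "{g \<in> carrier G. g [^] ?N = \<one>}"
  have "subgroup ?O G"
  proof (rule fin_subgroupI[OF fin])
    show "?O \<subseteq> carrier G" by blast
    show "\<one> \<in> ?O" by simp
    fix x y assume x: "x \<in> ?O" and y: "y \<in> ?O"
    have xc: "x \<in> carrier G" and yc: "y \<in> carrier G" using x y by auto
    obtain e where "(x \<otimes> y) [^] ?N = x [^] ?N \<otimes> y [^] ?N \<otimes> a [^] (?N * e)"
      using pow_pK xc yc by blast
    then have "(x \<otimes> y) [^] ?N = \<one>" using x y aN by simp
    then show "x \<otimes> y \<in> ?O" using xc yc by simp
  qed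
  moreover have "b1 \<in> ?O" "b2 \<in> ?O" using b_car b1N b2N by auto
  moreover have "D \<subseteq> ?O"
  proof
    fix u assume u: "u \<in> D"
    then obtain j where "u = a [^] (j::nat)" using D_a by blast
    then have "u [^] ?N = a [^] (?N * j)" using a_car nat_pow_pow by (simp add: mult.commute)
    then show "u \<in> ?O" using aN u D_car by auto
  qed
  ultimately have Oall: "?O = carrier G" by (rule QG)
  show ?thesis unfolding group_exponent_def
  proof (rule Least_equality)
    show "0 < ?N \<and> (\<forall>g\<in>carrier G. g [^] ?N = \<one>)" using Oall p1 by auto
    fix n :: nat assume n: "0 < n \<and> (\<forall>g\<in>carrier G. g [^] n = \<one>)"
    then have "ord b1 dvd n" "ord b2 dvd n" using pow_eq_id b_car by auto
    then have "p ^ e1 \<le> n" "p ^ e2 \<le> n" using o1 o2 n by (auto intro: dvd_imp_le)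
    then show "?N \<le> n" by (simp add: max_def)
  qed
qed

lemma ord_b_form: assumes b: "b \<in> carrier G" and ob: "group.ord (G Mod D) (D #> b) = p ^ n"
  shows "ord b = p ^ (n + oprime G p n b)"
proof -
  obtain k where k: "order G = p ^ k" using pgroup by blast
  have "ord b dvd p ^ k" using ord_dvd_group_order[OF b] k by simp
  then obtain e where e: "ord b = p ^ e" using divides_primepow_nat[OF p_prime] by blast
  interpret N: normal D G by (rule D_normal)
  have Qg: "group (G Mod D)" by (rule N.factorgroup_is_group)
  have hh: "group_hom G (G Mod D) (\<lambda>x. D #> x)"
    unfolding group_hom_def group_hom_axioms_def using is_group Qg N.r_coset_hom_Mod by blast
  have "(D #> b) [^]\<^bsub>G Mod D\<^esub> (ord b) = D #> (b [^] ord b)"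
    using group_hom.hom_nat_pow[OF hh b] by simp
  also have "\<dots> = \<one>\<^bsub>G Mod D\<^esub>" using b D_car by simp
  finally have "group.ord (G Mod D) (D #> b) dvd ord b"
    using group.pow_eq_id[OF Qg] b by (simp add: carrier_FactGroup)
  then have "p ^ n dvd p ^ e" using ob e by simp
  then have ne: "n \<le> e" using p1 by (simp add: dvd_power_iff)
  have "oprime G p n b = e - n"
    unfolding oprime_def
  proof (rule the_equality)
    show "ord b = p ^ (n + (e - n))" using e ne by simp
    fix k assume "ord b = p ^ (n + k)"
    then have "p ^ (n + k) = p ^ e" using e by simp
    then have "n + k = e" using p1 by (simp add: power_inject_exp)
    then show "k = e - n" by simp
  qed
  then show ?thesis using e ne by simp
qed

end

theorem lemma3p5:
  fixes G :: "('a, 'b) monoid_scheme" and p m n1 n2 :: nat and b1 b2 :: 'a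
  assumes grp: "group G"
    and fin: "finite (carrier G)"
    and p_prime: "Factorial_Ring.prime p" and p_odd: "odd p"
    and pgroup: "\<exists>k. order G = p ^ k"
    and nonabelian: "\<exists>x \<in> carrier G. \<exists>y \<in> carrier G. x \<otimes>\<^bsub>G\<^esub> y \<noteq> y \<otimes>\<^bsub>G\<^esub> x"
    and two_gen: "\<exists>x \<in> carrier G. \<exists>y \<in> carrier G. generate G {x, y} = carrier G"
    and cyclic_derived: "\<exists>g \<in> derived_subgroup G. generate G {g} = derived_subgroup G"
    and m_def: "card (derived_subgroup G) = p ^ m"
    and quot_iso: "G Mod (derived_subgroup G) \<cong>
                     (integer_mod_group (p ^ n1) \<times>\<times> integer_mod_group (p ^ n2))"
    and n_ord: "n1 \<ge> n2" "n2 \<ge> 1"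
    and b_Br: "is_basis_r G p m n1 n2 b1 b2"
    and b_max: "oprime G p n1 b1 = o1' G p m n1 n2" "oprime G p n2 b2 = o2' G p m n1 n2"
  shows "(let a = commutator G b2 b1; M = max (o1 G p n1 n2) (o2 G p n1 n2) in
           center G \<inter> derived_subgroup G = generate G {a [^]\<^bsub>G\<^esub> (p ^ M)}
         \<and> group_exponent G = p ^ max (n1 + o1' G p m n1 n2) (n2 + o2' G p m n1 n2)
         \<and> (\<forall>i \<ge> 2. gamma G i = generate G {a [^]\<^bsub>G\<^esub> (p ^ ((i - 2) * (m - M)))})
         \<and> nilpotency_class G = 1 + nat \<lceil>real m / real (m - M)\<rceil>)"
proof -
  interpret L: lem35 G p m n1 n2 b1 b2
    using grp fin p_prime p_odd pgroup nonabelian cyclic_derived m_def b_Br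
    by (simp add: lem35_def lem35_axioms_def)
  have isb: "is_basis G p n1 n2 b1 b2" using b_Br unfolding is_basis_r_def by (rule conjunct1)
  have ob1: "group.ord (G Mod derived G (carrier G)) (derived G (carrier G) #>\<^bsub>G\<^esub> b1) = p ^ n1"
    using isb unfolding is_basis_def Let_def by blast
  have ob2: "group.ord (G Mod derived G (carrier G)) (derived G (carrier G) #>\<^bsub>G\<^esub> b2) = p ^ n2"
    using isb unfolding is_basis_def Let_def by blast
  have o1: "group.ord G b1 = p ^ (n1 + o1' G p m n1 n2)"
    using L.ord_b_form[OF L.b_car(1) ob1] b_max(1) by simp
  have o2: "group.ord G b2 = p ^ (n2 + o2' G p m n1 n2)"
    using L.ord_b_form[OF L.b_car(2) ob2] b_max(2) by simp
  have e: "group_exponent G = p ^ max (n1 + o1' G p m n1 n2) (n2 + o2' G p m n1 n2)"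
    by (rule L.exponent_formula[OF o1 o2])
  show ?thesis
    unfolding Let_def using L.center_D e L.gamma_formula L.nil_class by blast
qed

end
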